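(* The comodule configuration $u:\mathbb B_{\bullet,0}\to\mathbf I$ is complete: defining $t_{\top+1}:\mathbb B_{i,j}\to\mathbb B_{i+1,j}$ by moving the discrete part of the bottom layer of the poset (the elements of the first poset layer comparable to no other element of $P$) into a new top layer of the set, the maps $t_{\top+1}$ are sections of the top vertical face maps $e_\top=e_{i+1}:\mathbb B_{i+1,j}\to\mathbb B_{i,j}$ and are monomorphisms of groupoids; they provide a left pointing.
   Context: For $n\ge0$, $\underline n=\{1,\dots,n\}$. $\mathbf I$ is the simplicial groupoid of layered finite sets ($\mathbf I_n$: maps $S\to\underline n$, $S$ a finite set). For $i,j\ge0$, $\mathbb B_{i,j}$ is the groupoid of pairs $(a:S\to\underline i,\ b:P\to\underline{j+1})$ with $S$ a finite set and $P$ a finite poset with monotone layering $b$, morphisms pairs of isomorphisms over the layerings. Vertical maps: $e_0:\mathbb B_{i,j}\to\mathbb B_{i-1,j}$ deletes the first set layer, $e_k$ ($0<k<i$) joins set layers $k,k+1$, and the top face map $e_i$ removes the last set layer and adds its elements, discretely ordered and incomparable with all of $P$, to the first poset layer; $t_k$ inserts an empty $(k+1)$st set layer. The augmentation $u:\mathbb B_{i,0}\to\mathbf I_i$ deletes the poset. A comodule configuration is a culf map from a Segal groupoid to a decomposition space; it is left pointed if equipped with extra top degeneracy maps $t_{\top+1}$ that are sections of the top face maps $e_\top$, and complete if these are monomorphisms (maps of groupoids whose homotopy fibres are empty or contractible). *)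

theory Defs
  imports Main "HOL-Library.FuncSet"
begin

text \<open>Elements of the finite set S and of the finite
poset P are taken from a common type 'a (required disjoint), so that elements can be moved
between the set part and the poset part.\<close>

record 'a bobj =
  Sset :: "'a set"
  slay :: "'a \<Rightarrow> nat"
  Pset :: "'a set"
  pord :: "'a rel"
  play :: "'a \<Rightarrow> nat"

definition carr :: "'a bobj \<Rightarrow> 'a set" where
  "carr X = Sset X \<union> Pset X"

definition Bobj :: "nat \<Rightarrow> nat \<Rightarrow> 'a bobj \<Rightarrow> bool" where
  "Bobj i j X \<longleftrightarrow>
     finite (Sset X) \<and> finite (Pset X) \<and> Sset X \<inter> Pset X = {} \<and>
     slay X \<in> extensional (Sset X) \<and> (\<forall>x\<in>Sset X. slay X x \<in> {1..i}) \<and>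
     play X \<in> extensional (Pset X) \<and> (\<forall>x\<in>Pset X. play X x \<in> {1..Suc j}) \<and>
     pord X \<subseteq> Pset X \<times> Pset X \<and> partial_order_on (Pset X) (pord X) \<and>
     (\<forall>x y. (x, y) \<in> pord X \<longrightarrow> play X x \<le> play X y)"

text \<open>Morphisms X \<rightarrow> Y: pairs of bijections over the layerings (the poset one an order
isomorphism), packaged as a single extensional function on S \<union> P.\<close>

definition Hom :: "'a bobj \<Rightarrow> 'a bobj \<Rightarrow> ('a \<Rightarrow> 'a) set" where
  "Hom X Y = {\<phi>. \<phi> \<in> extensional (carr X) \<and>
     bij_betw \<phi> (Sset X) (Sset Y) \<and> (\<forall>x\<in>Sset X. slay Y (\<phi> x) = slay X x) \<and>
     bij_betw \<phi> (Pset X) (Pset Y) \<and> (\<forall>x\<in>Pset X. play Y (\<phi> x) = play X x) \<and>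
     (\<forall>x\<in>Pset X. \<forall>y\<in>Pset X. (x, y) \<in> pord X \<longleftrightarrow> (\<phi> x, \<phi> y) \<in> pord Y)}"

definition gid :: "'a bobj \<Rightarrow> 'a \<Rightarrow> 'a" where
  "gid X = restrict id (carr X)"

definition gcomp :: "'a bobj \<Rightarrow> ('a \<Rightarrow> 'a) \<Rightarrow> ('a \<Rightarrow> 'a) \<Rightarrow> 'a \<Rightarrow> 'a" where
  "gcomp X \<psi> \<phi> = compose (carr X) \<psi> \<phi>"

definition discr :: "'a bobj \<Rightarrow> 'a set" where
  "discr X = {x \<in> Pset X. play X x = 1 \<and>
      (\<forall>y\<in>Pset X. y \<noteq> x \<longrightarrow> (x, y) \<notin> pord X \<and> (y, x) \<notin> pord X)}"

definition tobj :: "nat \<Rightarrow> 'a bobj \<Rightarrow> 'a bobj" where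
  "tobj i X = (let D = discr X; P' = Pset X - D in
     \<lparr> Sset = Sset X \<union> D,
       slay = (\<lambda>x. if x \<in> Sset X then slay X x else if x \<in> D then Suc i else undefined),
       Pset = P',
       pord = pord X \<inter> (P' \<times> P'),
       play = restrict (play X) P' \<rparr>)"

definition tmor :: "('a \<Rightarrow> 'a) \<Rightarrow> 'a \<Rightarrow> 'a" where
  "tmor \<phi> = \<phi>"

definition etop :: "nat \<Rightarrow> 'a bobj \<Rightarrow> 'a bobj" where
  "etop k X = (let L = {x \<in> Sset X. slay X x = k}; S' = Sset X - L in
     \<lparr> Sset = S',
       slay = restrict (slay X) S',
       Pset = Pset X \<union> L,
       pord = pord X \<union> Id_on L,
       play = (\<lambda>x. if x \<in> Pset X then play X x else if x \<in> L then 1 else undefined) \<rparr>)"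

definition emor :: "('a \<Rightarrow> 'a) \<Rightarrow> 'a \<Rightarrow> 'a" where
  "emor \<phi> = \<phi>"

end

theory Submission
  imports Defs
begin
lemma bij_split:
  assumes "bij_betw f A B" "C \<subseteq> A" "C' \<subseteq> B" "\<forall>x\<in>A. f x \<in> C' \<longleftrightarrow> x \<in> C"
  shows "bij_betw f C C' \<and> bij_betw f (A - C) (B - C')"
proof -
  have im: "f ` A = B" and inj: "inj_on f A" using assms(1) by (auto simp: bij_betw_def)
  have "f ` C = C'" using im assms(2-4) by blast
  moreover have "f ` (A - C) = B - C'" using im assms(2-4) by blast
  ultimately show ?thesis using inj assms(2)
    by (auto simp: bij_betw_def intro: inj_on_subset)
qed

lemma carr_tobj: "carr (tobj i X) = carr X"
  by (auto simp: carr_def tobj_def Let_def discr_def)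

lemma discr_sub: "discr X \<subseteq> Pset X" by (auto simp: discr_def)

lemma tobj_simps:
  "Sset (tobj i X) = Sset X \<union> discr X"
  "slay (tobj i X) = (\<lambda>x. if x \<in> Sset X then slay X x else if x \<in> discr X then Suc i else undefined)"
  "Pset (tobj i X) = Pset X - discr X"
  "pord (tobj i X) = pord X \<inter> ((Pset X - discr X) \<times> (Pset X - discr X))"
  "play (tobj i X) = restrict (play X) (Pset X - discr X)"
  by (simp_all add: tobj_def Let_def)

lemma discr_refl: "Bobj i j X \<Longrightarrow> x \<in> Pset X \<Longrightarrow> (x, x) \<in> pord X"
  unfolding Bobj_def partial_order_on_def preorder_on_def refl_on_def by auto

lemma discr_cmp: "d \<in> discr X \<Longrightarrow> y \<in> Pset X \<Longrightarrow> (d, y) \<in> pord X \<or> (y, d) \<in> pord X \<Longrightarrow> y = d"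
  unfolding discr_def by blast

lemma Hom_discr:
  assumes "\<phi> \<in> Hom X Y" "x \<in> Pset X"
  shows "\<phi> x \<in> discr Y \<longleftrightarrow> x \<in> discr X"
proof -
  have b: "bij_betw \<phi> (Pset X) (Pset Y)" and pl: "\<forall>x\<in>Pset X. play Y (\<phi> x) = play X x"
    and o: "\<forall>x\<in>Pset X. \<forall>y\<in>Pset X. (x, y) \<in> pord X \<longleftrightarrow> (\<phi> x, \<phi> y) \<in> pord Y"
    using assms(1) by (auto simp: Hom_def)
  have im: "Pset Y = \<phi> ` Pset X" using b by (simp add: bij_betw_def)
  have inj: "inj_on \<phi> (Pset X)" using b by (simp add: bij_betw_def)
  show ?thesis
  proof
    assume "\<phi> x \<in> discr Y"
    then show "x \<in> discr X" using assms(2) pl o im inj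
      unfolding discr_def by (auto simp: inj_on_def)
  next
    assume "x \<in> discr X"
    then show "\<phi> x \<in> discr Y" using assms(2) pl o im inj
      unfolding discr_def by (auto simp: inj_on_def)
  qed
qed

lemma Hom_sub1:
  assumes X: "Bobj i j X" and Y: "Bobj i j Y" and h: "\<phi> \<in> Hom X Y"
  shows "\<phi> \<in> Hom (tobj i X) (tobj i Y)"
proof -
  have e: "\<phi> \<in> extensional (carr X)" and bS: "bij_betw \<phi> (Sset X) (Sset Y)"
    and sl: "\<forall>x\<in>Sset X. slay Y (\<phi> x) = slay X x"
    and bP: "bij_betw \<phi> (Pset X) (Pset Y)" and pl: "\<forall>x\<in>Pset X. play Y (\<phi> x) = play X x"
    and o: "\<forall>x\<in>Pset X. \<forall>y\<in>Pset X. (x, y) \<in> pord X \<longleftrightarrow> (\<phi> x, \<phi> y) \<in> pord Y"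
    using h by (auto simp: Hom_def)
  have sp: "bij_betw \<phi> (discr X) (discr Y) \<and> bij_betw \<phi> (Pset X - discr X) (Pset Y - discr Y)"
    using bij_split[OF bP discr_sub discr_sub] Hom_discr[OF h] by simp
  have dY: "Sset Y \<inter> discr Y = {}" "Sset X \<inter> discr X = {}"
  proof -
    have "Sset Y \<inter> Pset Y = {}" "Sset X \<inter> Pset X = {}" using X Y by (simp_all add: Bobj_def)
    then show "Sset Y \<inter> discr Y = {}" "Sset X \<inter> discr X = {}" using discr_sub[of X] discr_sub[of Y] by blast+
  qed
  have bS2: "bij_betw \<phi> (Sset X \<union> discr X) (Sset Y \<union> discr Y)"
    by (rule bij_betw_combine[OF bS conjunct1[OF sp] dY(1)])
  have imS: "\<phi> ` Sset X = Sset Y" and imD: "\<phi> ` discr X = discr Y"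
    using bS sp by (auto simp: bij_betw_def)
  show ?thesis
    unfolding Hom_def carr_tobj tobj_simps
  proof (intro CollectI conjI ballI)
    show "\<phi> \<in> extensional (carr X)" by fact
    show "bij_betw \<phi> (Sset X \<union> discr X) (Sset Y \<union> discr Y)" by fact
    show "bij_betw \<phi> (Pset X - discr X) (Pset Y - discr Y)" using sp by blast
  next
    fix x assume x: "x \<in> Sset X \<union> discr X"
    show "(if \<phi> x \<in> Sset Y then slay Y (\<phi> x) else if \<phi> x \<in> discr Y then Suc i else undefined) =
          (if x \<in> Sset X then slay X x else if x \<in> discr X then Suc i else undefined)"
    proof (cases "x \<in> Sset X")
      case True then show ?thesis using sl imS by auto
    next
      case False then have "x \<in> discr X" using x by blast
      moreover then have "\<phi> x \<in> discr Y" using imD by blast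
      ultimately show ?thesis using False dY by auto
    qed
  next
    fix x assume x: "x \<in> Pset X - discr X"
    then have "\<phi> x \<in> Pset Y - discr Y" using sp by (auto simp: bij_betw_def)
    then show "restrict (play Y) (Pset Y - discr Y) (\<phi> x) = restrict (play X) (Pset X - discr X) x"
      using x pl by auto
  next
    fix x y assume x: "x \<in> Pset X - discr X" and y: "y \<in> Pset X - discr X"
    then have "\<phi> x \<in> Pset Y - discr Y" "\<phi> y \<in> Pset Y - discr Y" using sp by (auto simp: bij_betw_def)
    then show "((x, y) \<in> pord X \<inter> (Pset X - discr X) \<times> (Pset X - discr X)) =
      ((\<phi> x, \<phi> y) \<in> pord Y \<inter> (Pset Y - discr Y) \<times> (Pset Y - discr Y))"
      using x y o by auto
  qed
qed

lemma Hom_sub2: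
  assumes X: "Bobj i j X" and Y: "Bobj i j Y" and h: "\<phi> \<in> Hom (tobj i X) (tobj i Y)"
  shows "\<phi> \<in> Hom X Y"
proof -
  have e: "\<phi> \<in> extensional (carr X)"
    and bS: "bij_betw \<phi> (Sset X \<union> discr X) (Sset Y \<union> discr Y)"
    and sl: "\<forall>x\<in>Sset X \<union> discr X. (if \<phi> x \<in> Sset Y then slay Y (\<phi> x) else if \<phi> x \<in> discr Y then Suc i else undefined) =
          (if x \<in> Sset X then slay X x else if x \<in> discr X then Suc i else undefined)"
    and bP: "bij_betw \<phi> (Pset X - discr X) (Pset Y - discr Y)"
    and pl: "\<forall>x\<in>Pset X - discr X. restrict (play Y) (Pset Y - discr Y) (\<phi> x) = restrict (play X) (Pset X - discr X) x"
    and o: "\<forall>x\<in>Pset X - discr X. \<forall>y\<in>Pset X - discr X. ((x, y) \<in> pord X \<inter> (Pset X - discr X) \<times> (Pset X - discr X)) =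
      ((\<phi> x, \<phi> y) \<in> pord Y \<inter> (Pset Y - discr Y) \<times> (Pset Y - discr Y))"
    using h unfolding Hom_def carr_tobj tobj_simps by blast+
  have dis: "Sset Y \<inter> Pset Y = {}" "Sset X \<inter> Pset X = {}" using X Y by (simp_all add: Bobj_def)
  have dY: "Sset Y \<inter> discr Y = {}" "Sset X \<inter> discr X = {}"
    using dis discr_sub[of X] discr_sub[of Y] by blast+
  have sX: "\<forall>x\<in>Sset X. slay X x \<le> i" using X by (simp add: Bobj_def)
  have sY: "\<forall>x\<in>Sset Y. slay Y x \<le> i" using Y by (simp add: Bobj_def)
  have imS: "\<phi> ` (Sset X \<union> discr X) = Sset Y \<union> discr Y" using bS by (simp add: bij_betw_def)
  have key: "\<forall>x\<in>Sset X \<union> discr X. \<phi> x \<in> discr Y \<longleftrightarrow> x \<in> discr X"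
  proof
    fix x assume x: "x \<in> Sset X \<union> discr X"
    have px: "\<phi> x \<in> Sset Y \<union> discr Y" using imS x by blast
    note sx = bspec[OF sl x]
    show "\<phi> x \<in> discr Y \<longleftrightarrow> x \<in> discr X"
    proof (cases "x \<in> Sset X")
      case True
      then have "x \<notin> discr X" using dY by blast
      moreover have "\<phi> x \<notin> discr Y"
      proof
        assume a: "\<phi> x \<in> discr Y"
        then have "\<phi> x \<notin> Sset Y" using dY by blast
        then show False using sx a True sX by auto
      qed
      ultimately show ?thesis by blast
    next
      case False
      then have xd: "x \<in> discr X" using x by blast
      moreover have "\<phi> x \<in> discr Y"
      proof (rule ccontr)
        assume a: "\<phi> x \<notin> discr Y"
        then have "\<phi> x \<in> Sset Y" using px by blast
        then show False using sx a False xd sY by fastforce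
      qed
      ultimately show ?thesis by blast
    qed
  qed
  have sp: "bij_betw \<phi> (discr X) (discr Y) \<and> bij_betw \<phi> ((Sset X \<union> discr X) - discr X) ((Sset Y \<union> discr Y) - discr Y)"
    by (rule bij_split[OF bS _ _ key]) blast+
  have e1: "(Sset X \<union> discr X) - discr X = Sset X" "(Sset Y \<union> discr Y) - discr Y = Sset Y" using dY by blast+
  have bS1: "bij_betw \<phi> (Sset X) (Sset Y)" using sp e1 by simp
  have bD: "bij_betw \<phi> (discr X) (discr Y)" using sp by simp
  have e2: "(Pset X - discr X) \<union> discr X = Pset X" "(Pset Y - discr Y) \<union> discr Y = Pset Y"
    using discr_sub[of X] discr_sub[of Y] by blast+
  have bP1: "bij_betw \<phi> (Pset X) (Pset Y)"
    using bij_betw_combine[OF bP bD] e2 by (metis Diff_disjoint Int_commute)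
  have inj: "inj_on \<phi> (Pset X)" using bP1 by (simp add: bij_betw_def)
  have memP: "\<And>x. x \<in> Pset X - discr X \<Longrightarrow> \<phi> x \<in> Pset Y - discr Y" using bP by (auto simp: bij_betw_def)
  have memD: "\<And>x. x \<in> discr X \<Longrightarrow> \<phi> x \<in> discr Y" using bD by (auto simp: bij_betw_def)
  show ?thesis
    unfolding Hom_def
  proof (intro CollectI conjI ballI)
    show "\<phi> \<in> extensional (carr X)" by fact
    show "bij_betw \<phi> (Sset X) (Sset Y)" by fact
    show "bij_betw \<phi> (Pset X) (Pset Y)" by fact
  next
    fix x assume x: "x \<in> Sset X"
    then have "\<phi> x \<in> Sset Y" using bS1 by (auto simp: bij_betw_def)
    moreover have "x \<in> Sset X \<union> discr X" using x by blast
    note bspec[OF sl this]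
    ultimately show "slay Y (\<phi> x) = slay X x" using x by simp
  next
    fix x assume x: "x \<in> Pset X"
    show "play Y (\<phi> x) = play X x"
    proof (cases "x \<in> discr X")
      case True
      then show ?thesis using memD[OF True] by (simp add: discr_def)
    next
      case False
      then have xx: "x \<in> Pset X - discr X" using x by blast
      show ?thesis using memP[OF xx] bspec[OF pl xx] xx by simp
    qed
  next
    fix x y assume x: "x \<in> Pset X" and y: "y \<in> Pset X"
    show "(x, y) \<in> pord X \<longleftrightarrow> (\<phi> x, \<phi> y) \<in> pord Y"
    proof (cases "x \<in> discr X \<or> y \<in> discr X")
      case True
      have px: "\<phi> x \<in> Pset Y" "\<phi> y \<in> Pset Y" using x y bP1 by (auto simp: bij_betw_def)
      have dxy: "x \<in> discr X \<or> y \<in> discr X" by fact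
      have A: "(x, y) \<in> pord X \<longleftrightarrow> x = y"
      proof
        assume xy: "(x, y) \<in> pord X"
        from dxy show "x = y"
        proof
          assume "x \<in> discr X" then show "x = y" using discr_cmp[of x X y] xy y by simp
        next
          assume "y \<in> discr X" then show "x = y" using discr_cmp[of y X x] xy x by simp
        qed
      next
        assume "x = y" then show "(x, y) \<in> pord X" using discr_refl[OF X x] by simp
      qed
      have dxy': "\<phi> x \<in> discr Y \<or> \<phi> y \<in> discr Y" using dxy memD by blast
      have B: "(\<phi> x, \<phi> y) \<in> pord Y \<longleftrightarrow> \<phi> x = \<phi> y"
      proof
        assume xy: "(\<phi> x, \<phi> y) \<in> pord Y"
        from dxy' show "\<phi> x = \<phi> y"
        proof
          assume "\<phi> x \<in> discr Y" then show ?thesis using discr_cmp[of "\<phi> x" Y "\<phi> y"] xy px by simp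
        next
          assume "\<phi> y \<in> discr Y" then show ?thesis using discr_cmp[of "\<phi> y" Y "\<phi> x"] xy px by simp
        qed
      next
        assume "\<phi> x = \<phi> y" then show "(\<phi> x, \<phi> y) \<in> pord Y" using discr_refl[OF Y px(1)] by simp
      qed
      have C: "\<phi> x = \<phi> y \<longleftrightarrow> x = y" using inj x y by (auto simp: inj_on_def)
      show ?thesis using A B C by simp
    next
      case False
      then have xx: "x \<in> Pset X - discr X" and yy: "y \<in> Pset X - discr X" using x y by blast+
      have "((x, y) \<in> pord X \<inter> (Pset X - discr X) \<times> (Pset X - discr X)) =
        ((\<phi> x, \<phi> y) \<in> pord Y \<inter> (Pset Y - discr Y) \<times> (Pset Y - discr Y))"
        using o xx yy by blast
      then show ?thesis using memP[OF xx] memP[OF yy] xx yy by simp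
    qed
  qed
qed

lemma Bobj_tobj:
  assumes X: "Bobj i j X" shows "Bobj (Suc i) j (tobj i X)"
proof -
  note B = X[unfolded Bobj_def]
  have D: "discr X \<subseteq> Pset X" by (rule discr_sub)
  have po: "partial_order_on (Pset X) (pord X)" using B by blast
  have po2: "partial_order_on (Pset X - discr X) (pord X \<inter> ((Pset X - discr X) \<times> (Pset X - discr X)))"
    using po unfolding partial_order_on_def preorder_on_def refl_on_def trans_def antisym_def by blast
  have fin: "finite (Sset X \<union> discr X)" "finite (Pset X - discr X)"
    using B finite_subset[OF D] by auto
  have ex: "(\<lambda>x. if x \<in> Sset X then slay X x else if x \<in> discr X then Suc i else undefined) \<in> extensional (Sset X \<union> discr X)"
    by (auto simp: extensional_def)
  have sl: "\<forall>x\<in>Sset X \<union> discr X. (if x \<in> Sset X then slay X x else if x \<in> discr X then Suc i else undefined) \<in> {1..Suc i}"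
    using B by auto
  have pl: "\<forall>x\<in>Pset X - discr X. restrict (play X) (Pset X - discr X) x \<in> {1..Suc j}" using B by auto
  have mono: "\<forall>x y. (x, y) \<in> pord X \<inter> ((Pset X - discr X) \<times> (Pset X - discr X)) \<longrightarrow>
      restrict (play X) (Pset X - discr X) x \<le> restrict (play X) (Pset X - discr X) y" using B by auto
  have dj: "(Sset X \<union> discr X) \<inter> (Pset X - discr X) = {}" using B D by blast
  show ?thesis unfolding Bobj_def tobj_simps
    using fin ex sl pl mono dj po2 by auto
qed

lemma etop_tobj:
  assumes X: "Bobj i j X" shows "etop (Suc i) (tobj i X) = X"
proof -
  note B = X[unfolded Bobj_def]
  have D: "discr X \<subseteq> Pset X" by (rule discr_sub)
  have dj: "Sset X \<inter> Pset X = {}" using B by blast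
  have sX: "\<forall>x\<in>Sset X. slay X x \<le> i" using B by auto
  have L: "{x \<in> Sset (tobj i X). slay (tobj i X) x = Suc i} = discr X"
    unfolding tobj_simps
  proof (rule set_eqI)
    fix x show "x \<in> {x \<in> Sset X \<union> discr X. (if x \<in> Sset X then slay X x else if x \<in> discr X then Suc i else undefined) = Suc i} \<longleftrightarrow> x \<in> discr X"
      using sX dj D by (cases "x \<in> Sset X") auto
  qed
  have e1: "Sset (tobj i X) - discr X = Sset X" unfolding tobj_simps using dj D by blast
  have s1: "restrict (slay (tobj i X)) (Sset X) = slay X"
  proof
    fix x show "restrict (slay (tobj i X)) (Sset X) x = slay X x"
      using B unfolding tobj_simps by (auto simp: extensional_def)
  qed
  have p1: "Pset (tobj i X) \<union> discr X = Pset X" unfolding tobj_simps using D by blast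
  have o1: "pord (tobj i X) \<union> Id_on (discr X) = pord X"
  proof
    show "pord (tobj i X) \<union> Id_on (discr X) \<subseteq> pord X"
      unfolding tobj_simps using discr_refl[OF X] D by auto
  next
    show "pord X \<subseteq> pord (tobj i X) \<union> Id_on (discr X)"
    proof
      fix p assume p: "p \<in> pord X"
      obtain a b where ab: "p = (a, b)" by (cases p)
      have a: "a \<in> Pset X" and b: "b \<in> Pset X" using p ab B by auto
      show "p \<in> pord (tobj i X) \<union> Id_on (discr X)"
      proof (cases "a \<in> discr X \<or> b \<in> discr X")
        case True
        then have "a = b" using discr_cmp[of a X b] discr_cmp[of b X a] p ab a b by auto
        then show ?thesis using True ab by (auto simp: Id_on_def)
      next
        case False then show ?thesis unfolding tobj_simps using p ab a b by auto
      qed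
    qed
  qed
  have pl1: "(\<lambda>x. if x \<in> Pset (tobj i X) then play (tobj i X) x else if x \<in> discr X then 1 else undefined) = play X"
  proof
    fix x show "(if x \<in> Pset (tobj i X) then play (tobj i X) x else if x \<in> discr X then 1 else undefined) = play X x"
      using B unfolding tobj_simps by (auto simp: extensional_def discr_def)
  qed
  show ?thesis
    unfolding etop_def Let_def L e1 s1 p1 o1 pl1 by simp
qed

theorem lemma3p2:
  fixes i j :: nat
  shows
    "(\<forall>X::'a bobj. Bobj i j X \<longrightarrow> Bobj (Suc i) j (tobj i X))
   \<and> (\<forall>X::'a bobj. Bobj i j X \<longrightarrow> tmor (gid X) = gid (tobj i X))
   \<and> (\<forall>(X::'a bobj) Y Z \<phi> \<psi>. Bobj i j X \<and> Bobj i j Y \<and> Bobj i j Z \<and>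
         \<phi> \<in> Hom X Y \<and> \<psi> \<in> Hom Y Z \<longrightarrow>
         tmor (gcomp X \<psi> \<phi>) = gcomp (tobj i X) (tmor \<psi>) (tmor \<phi>))
   \<and> (\<forall>X::'a bobj. Bobj i j X \<longrightarrow> etop (Suc i) (tobj i X) = X)
   \<and> (\<forall>(X::'a bobj) Y \<phi>. Bobj i j X \<and> Bobj i j Y \<and> \<phi> \<in> Hom X Y \<longrightarrow> emor (tmor \<phi>) = \<phi>)
   \<and> (\<forall>(X::'a bobj) Y. Bobj i j X \<and> Bobj i j Y \<longrightarrow>
         bij_betw tmor (Hom X Y) (Hom (tobj i X) (tobj i Y)))"
proof (intro conjI allI impI)
  fix X :: "'a bobj" assume "Bobj i j X"
  then show "Bobj (Suc i) j (tobj i X)" by (rule Bobj_tobj)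
next
  fix X :: "'a bobj" show "tmor (gid X) = gid (tobj i X)" by (simp add: tmor_def gid_def carr_tobj)
next
  fix X Y Z :: "'a bobj" and \<phi> \<psi>
  show "tmor (gcomp X \<psi> \<phi>) = gcomp (tobj i X) (tmor \<psi>) (tmor \<phi>)"
    by (simp add: tmor_def gcomp_def carr_tobj)
next
  fix X :: "'a bobj" assume "Bobj i j X"
  then show "etop (Suc i) (tobj i X) = X" by (rule etop_tobj)
next
  fix X Y :: "'a bobj" and \<phi> show "emor (tmor \<phi>) = \<phi>" by (simp add: tmor_def emor_def)
next
  fix X Y :: "'a bobj" assume a: "Bobj i j X \<and> Bobj i j Y"
  have H: "Hom (tobj i X) (tobj i Y) = Hom X Y"
    using Hom_sub1[of i j X Y] Hom_sub2[of i j X Y] a by blast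
  have t: "tmor = id" by (rule ext) (simp add: tmor_def)
  show "bij_betw tmor (Hom X Y) (Hom (tobj i X) (tobj i Y))" unfolding t H by (rule bij_betw_id)
qed

end
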